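(* Under the setting below, assume moreover that $f_\Theta^\star$ is strictly decreasing and continuous from $[0,\infty)$ onto $(0,1]$, with inverse $f_\Theta^{\star-1}$. Then each marginal satisfies $\Pr(X_i> x)=f_\Theta^\star(x)$ for $x\ge0$, and the survival copula $C$ of $(X_1,\dots,X_n)$, i.e. the function with $\Pr(X_1> x_1,\dots,X_n> x_n)=C\big(f_\Theta^\star(x_1),\dots,f_\Theta^\star(x_n)\big)$, is given for $u_i\in(0,1]$ by $$C(u_1,\dots,u_n)=\sum_{\ell_1=0}^{m_1}\cdots\sum_{\ell_n=0}^{m_n}\beta_{\ell_1,\dots,\ell_n}\,f_\Theta^\star\Big(\sum_{i=1}^n \ell_i\, f_\Theta^{\star-1}(u_i)\Big),$$ with $$\beta_{\ell_1,\dots,\ell_n}=\sum_{\nu_1=0}^{\ell_1}\cdots\sum_{\nu_n=0}^{\ell_n}(-1)^{\sum_{i=1}^n(\ell_i-\nu_i)}\Big[\prod_{i=1}^n\binom{m_i-\nu_i}{m_i-\ell_i}\Big]\Big[\prod_{i=1}^n\binom{m_i}{\nu_i}\Big]\alpha\Big(\tfrac{\nu_1}{m_1},\dots,\tfrac{\nu_n}{m_n}\Big).$$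
   Context: Setting: $n\ge2$, $m_1,\dots,m_n\ge1$ integers; $\alpha$ is a real function on the grid $\prod_i\{0,\tfrac1{m_i},\dots,1\}$ such that $C_B(u_1,\dots,u_n)=\sum_{\nu_1=0}^{m_1}\cdots\sum_{\nu_n=0}^{m_n}\alpha(\tfrac{\nu_1}{m_1},\dots,\tfrac{\nu_n}{m_n})\prod_{i=1}^n\binom{m_i}{\nu_i}u_i^{\nu_i}(1-u_i)^{m_i-\nu_i}$ is a copula on $[0,1]^n$. $(Z_1,\dots,Z_n)$ has standard exponential marginals and joint survival function $\Pr(Z_1>z_1,\dots,Z_n>z_n)=C_B(e^{-z_1},\dots,e^{-z_n})$. $\Theta$ is a positive random variable independent of $(Z_1,\dots,Z_n)$ with density $f_\Theta$ and Laplace transform $f_\Theta^\star(s)=E[e^{-s\Theta}]$, and $X_i=Z_i/\Theta$. *)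

theory Defs
  imports "HOL-Probability.Probability"
begin

text \<open>Points of [0,1]^n are functions nat => real; only indices i < n matter.
  Multi-indices (nu_1,...,nu_n) are elements of PiE {..<n} (...).\<close>

definition bernstein_copula :: "nat \<Rightarrow> (nat \<Rightarrow> nat) \<Rightarrow> ((nat \<Rightarrow> real) \<Rightarrow> real) \<Rightarrow> (nat \<Rightarrow> real) \<Rightarrow> real" where
  "bernstein_copula n m alpha u =
     (\<Sum>\<nu>\<in>PiE {..<n} (\<lambda>i. {0..m i}).
        alpha (\<lambda>i. real (\<nu> i) / real (m i)) *
        (\<Prod>i<n. real (m i choose \<nu> i) * u i ^ \<nu> i * (1 - u i) ^ (m i - \<nu> i)))"

definition is_copula :: "nat \<Rightarrow> ((nat \<Rightarrow> real) \<Rightarrow> real) \<Rightarrow> bool" where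
  "is_copula n C \<longleftrightarrow>
     (\<forall>u. (\<forall>i<n. u i \<in> {0..1}) \<longrightarrow> (\<exists>i<n. u i = 0) \<longrightarrow> C u = 0) \<and>
     (\<forall>u k. k < n \<longrightarrow> u k \<in> {0..1} \<longrightarrow> (\<forall>i<n. i \<noteq> k \<longrightarrow> u i = 1) \<longrightarrow> C u = u k) \<and>
     (\<forall>a b. (\<forall>i<n. 0 \<le> a i \<and> a i \<le> b i \<and> b i \<le> 1) \<longrightarrow>
        0 \<le> (\<Sum>S\<in>Pow {..<n}. (-1) ^ (n - card S) * C (\<lambda>i. if i \<in> S then b i else a i)))"

definition beta_coeff :: "nat \<Rightarrow> (nat \<Rightarrow> nat) \<Rightarrow> ((nat \<Rightarrow> real) \<Rightarrow> real) \<Rightarrow> (nat \<Rightarrow> nat) \<Rightarrow> real" where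
  "beta_coeff n m alpha l =
     (\<Sum>\<nu>\<in>PiE {..<n} (\<lambda>i. {0..l i}).
        (-1) ^ (\<Sum>i<n. l i - \<nu> i) *
        (\<Prod>i<n. real ((m i - \<nu> i) choose (m i - l i))) *
        (\<Prod>i<n. real (m i choose \<nu> i)) *
        alpha (\<lambda>i. real (\<nu> i) / real (m i)))"

end

theory Submission
  imports Defs
begin

lemma bern1:
  fixes w :: real
  assumes "\<nu> \<le> m"
  shows "real (m choose \<nu>) * w ^ \<nu> * (1 - w) ^ (m - \<nu>) =
    (\<Sum>l\<in>{0..m}. if \<nu> \<le> l then (-1) ^ (l - \<nu>) * real ((m - \<nu>) choose (m - l)) * real (m choose \<nu>) * w ^ l else 0)"
proof -
  have "(1 - w) ^ (m - \<nu>) = (\<Sum>j\<le>m-\<nu>. real ((m - \<nu>) choose j) * (-w) ^ j)"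
    using binomial_ring[of "-w" 1 "m - \<nu>"] by simp
  also have "\<dots> = (\<Sum>l\<in>{\<nu>..m}. real ((m - \<nu>) choose (l - \<nu>)) * (-w) ^ (l - \<nu>))"
  proof (rule sum.reindex_bij_witness[where i="\<lambda>l. l - \<nu>" and j="\<lambda>j. j + \<nu>"])
  qed (use assms in auto)
  also have "\<dots> = (\<Sum>l\<in>{\<nu>..m}. real ((m - \<nu>) choose (m - l)) * (-1) ^ (l - \<nu>) * w ^ (l - \<nu>))"
  proof (rule sum.cong)
    fix l assume l: "l \<in> {\<nu>..m}"
    have "(m - \<nu>) choose (l - \<nu>) = (m - \<nu>) choose ((m - \<nu>) - (l - \<nu>))"
      using l by (intro binomial_symmetric) auto
    also have "(m - \<nu>) - (l - \<nu>) = m - l" using l by auto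
    finally show "real ((m - \<nu>) choose (l - \<nu>)) * (-w) ^ (l - \<nu>) = real ((m - \<nu>) choose (m - l)) * (-1) ^ (l - \<nu>) * w ^ (l - \<nu>)"
      by (simp add: power_minus[of w])
  qed simp
  finally have bin: "(1 - w) ^ (m - \<nu>) = (\<Sum>l\<in>{\<nu>..m}. real ((m - \<nu>) choose (m - l)) * (-1) ^ (l - \<nu>) * w ^ (l - \<nu>))" .
  have "real (m choose \<nu>) * w ^ \<nu> * (1 - w) ^ (m - \<nu>) =
     (\<Sum>l\<in>{\<nu>..m}. (-1) ^ (l - \<nu>) * real ((m - \<nu>) choose (m - l)) * real (m choose \<nu>) * w ^ l)"
  proof -
    have "real (m choose \<nu>) * w ^ \<nu> * (1 - w) ^ (m - \<nu>) = real (m choose \<nu>) * w ^ \<nu> * (\<Sum>l\<in>{\<nu>..m}. real ((m - \<nu>) choose (m - l)) * (-1) ^ (l - \<nu>) * w ^ (l - \<nu>))"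
      by (simp only: bin)
    also have "\<dots> = (\<Sum>l\<in>{\<nu>..m}. (-1) ^ (l - \<nu>) * real ((m - \<nu>) choose (m - l)) * real (m choose \<nu>) * w ^ l)"
      unfolding sum_distrib_left
  proof (rule sum.cong[OF refl])
    fix l assume l: "l \<in> {\<nu>..m}"
    have wl: "w ^ \<nu> * w ^ (l - \<nu>) = w ^ l" using l by (simp add: power_add[symmetric])
    show "real (m choose \<nu>) * w ^ \<nu> * (real (m - \<nu> choose (m - l)) * (- 1) ^ (l - \<nu>) * w ^ (l - \<nu>)) =
         (- 1) ^ (l - \<nu>) * real (m - \<nu> choose (m - l)) * real (m choose \<nu>) * w ^ l"
      by (simp only: wl[symmetric] mult_ac)
  qed
  finally show ?thesis .
  qed
  also have "\<dots> = (\<Sum>l\<in>{0..m}. if \<nu> \<le> l then (-1) ^ (l - \<nu>) * real ((m - \<nu>) choose (m - l)) * real (m choose \<nu>) * w ^ l else 0)"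
    by (rule sum.mono_neutral_cong_left) auto
  finally show ?thesis .
qed

lemma bern_multi:
  fixes w :: "nat \<Rightarrow> real"
  shows "bernstein_copula n m alpha w =
    (\<Sum>l\<in>PiE {..<n} (\<lambda>i. {0..m i}). beta_coeff n m alpha l * (\<Prod>i<n. w i ^ l i))"
proof -
  let ?P = "\<lambda>l. PiE {..<n} (\<lambda>i. {0..l i})"
  define d where "d \<nu> l = (-1) ^ (\<Sum>i<n. l i - \<nu> i) *
        (\<Prod>i<n. real ((m i - \<nu> i) choose (m i - l i))) *
        (\<Prod>i<n. real (m i choose \<nu> i))" for \<nu> l :: "nat \<Rightarrow> nat"
  define c where "c \<nu> l = d \<nu> l * (\<Prod>i<n. w i ^ l i)" for \<nu> l :: "nat \<Rightarrow> nat"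
  have step: "(\<Prod>i<n. real (m i choose \<nu> i) * w i ^ \<nu> i * (1 - w i) ^ (m i - \<nu> i))
      = (\<Sum>l\<in>?P m. if (\<forall>i<n. \<nu> i \<le> l i) then c \<nu> l else 0)" if \<nu>: "\<nu> \<in> ?P m" for \<nu>
  proof -
    have "(\<Prod>i<n. real (m i choose \<nu> i) * w i ^ \<nu> i * (1 - w i) ^ (m i - \<nu> i))
       = (\<Prod>i<n. \<Sum>k\<in>{0..m i}. if \<nu> i \<le> k then (-1) ^ (k - \<nu> i) * real ((m i - \<nu> i) choose (m i - k)) * real (m i choose \<nu> i) * w i ^ k else 0)"
      by (rule prod.cong[OF refl], rule bern1) (use \<nu> in \<open>auto simp: PiE_iff\<close>)
    also have "\<dots> = (\<Sum>l\<in>?P m. \<Prod>i<n. if \<nu> i \<le> l i then (-1) ^ (l i - \<nu> i) * real ((m i - \<nu> i) choose (m i - l i)) * real (m i choose \<nu> i) * w i ^ l i else 0)"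
      by (rule prod_sum_PiE) auto
    also have "\<dots> = (\<Sum>l\<in>?P m. if (\<forall>i<n. \<nu> i \<le> l i) then c \<nu> l else 0)"
    proof (rule sum.cong[OF refl])
      fix l
      show "(\<Prod>i<n. if \<nu> i \<le> l i then (-1) ^ (l i - \<nu> i) * real ((m i - \<nu> i) choose (m i - l i)) * real (m i choose \<nu> i) * w i ^ l i else 0)
          = (if (\<forall>i<n. \<nu> i \<le> l i) then c \<nu> l else 0)"
      proof (cases "\<forall>i<n. \<nu> i \<le> l i")
        case True
        have "(\<Prod>i<n. if \<nu> i \<le> l i then (-1) ^ (l i - \<nu> i) * real ((m i - \<nu> i) choose (m i - l i)) * real (m i choose \<nu> i) * w i ^ l i else 0)
            = (\<Prod>i<n. (-1) ^ (l i - \<nu> i) * real ((m i - \<nu> i) choose (m i - l i)) * real (m i choose \<nu> i) * w i ^ l i)"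
          by (rule prod.cong) (use True in auto)
        also have "(\<Prod>i<n. (-1) ^ (l i - \<nu> i) * real ((m i - \<nu> i) choose (m i - l i)) * real (m i choose \<nu> i) * w i ^ l i)
            = (\<Prod>i<n. (-1::real) ^ (l i - \<nu> i)) * (\<Prod>i<n. real ((m i - \<nu> i) choose (m i - l i))) * (\<Prod>i<n. real (m i choose \<nu> i)) * (\<Prod>i<n. w i ^ l i)"
          by (simp only: prod.distrib)
        also have "(\<Prod>i<n. (-1::real) ^ (l i - \<nu> i)) = (-1) ^ (\<Sum>i<n. l i - \<nu> i)"
          by (rule power_sum[symmetric])
        also have "(-1) ^ (\<Sum>i<n. l i - \<nu> i) * (\<Prod>i<n. real ((m i - \<nu> i) choose (m i - l i))) * (\<Prod>i<n. real (m i choose \<nu> i)) * (\<Prod>i<n. w i ^ l i) = c \<nu> l"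
          unfolding c_def d_def by (simp only: mult.assoc)
        also have "c \<nu> l = (if (\<forall>i<n. \<nu> i \<le> l i) then c \<nu> l else 0)" using True by simp
        finally show ?thesis .
      next
        case False
        then obtain i where "i < n" "\<not> \<nu> i \<le> l i" by auto
        then have "(\<Prod>i<n. if \<nu> i \<le> l i then (-1) ^ (l i - \<nu> i) * real ((m i - \<nu> i) choose (m i - l i)) * real (m i choose \<nu> i) * w i ^ l i else 0) = 0"
          by (intro prod_zero) auto
        moreover have "\<not> (\<forall>i<n. \<nu> i \<le> l i)" using False .
        ultimately show ?thesis by (simp only: if_False)
      qed
    qed
    finally show ?thesis .
  qed
  have "bernstein_copula n m alpha w = (\<Sum>\<nu>\<in>?P m. \<Sum>l\<in>?P m. alpha (\<lambda>i. real (\<nu> i) / real (m i)) * (if (\<forall>i<n. \<nu> i \<le> l i) then c \<nu> l else 0))"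
    unfolding bernstein_copula_def by (intro sum.cong refl) (simp add: step sum_distrib_left)
  also have "\<dots> = (\<Sum>l\<in>?P m. \<Sum>\<nu>\<in>?P m. alpha (\<lambda>i. real (\<nu> i) / real (m i)) * (if (\<forall>i<n. \<nu> i \<le> l i) then c \<nu> l else 0))"
    by (rule sum.swap)
  also have "\<dots> = (\<Sum>l\<in>?P m. \<Sum>\<nu>\<in>?P l. alpha (\<lambda>i. real (\<nu> i) / real (m i)) * c \<nu> l)"
  proof (rule sum.cong[OF refl])
    fix l assume l: "l \<in> ?P m"
    have fin: "finite (?P m)" by (rule finite_PiE) auto
    have sub: "?P l \<subseteq> ?P m" using l by (auto simp: PiE_def Pi_def extensional_def intro: order_trans)
    have "(\<Sum>\<nu>\<in>?P m. alpha (\<lambda>i. real (\<nu> i) / real (m i)) * (if (\<forall>i<n. \<nu> i \<le> l i) then c \<nu> l else 0))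
       = (\<Sum>\<nu>\<in>?P l. alpha (\<lambda>i. real (\<nu> i) / real (m i)) * (if (\<forall>i<n. \<nu> i \<le> l i) then c \<nu> l else 0))"
      by (rule sum.mono_neutral_right[OF fin sub]) (auto simp: PiE_def Pi_def)
    also have "\<dots> = (\<Sum>\<nu>\<in>?P l. alpha (\<lambda>i. real (\<nu> i) / real (m i)) * c \<nu> l)"
      by (intro sum.cong refl) (auto simp: PiE_def Pi_def)
    finally show "(\<Sum>\<nu>\<in>?P m. alpha (\<lambda>i. real (\<nu> i) / real (m i)) * (if (\<forall>i<n. \<nu> i \<le> l i) then c \<nu> l else 0))
       = (\<Sum>\<nu>\<in>?P l. alpha (\<lambda>i. real (\<nu> i) / real (m i)) * c \<nu> l)" .
  qed
  also have "\<dots> = (\<Sum>l\<in>?P m. beta_coeff n m alpha l * (\<Prod>i<n. w i ^ l i))"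
  proof (rule sum.cong[OF refl])
    fix l
    have "(\<Sum>\<nu>\<in>?P l. alpha (\<lambda>i. real (\<nu> i) / real (m i)) * c \<nu> l)
        = (\<Sum>\<nu>\<in>?P l. d \<nu> l * alpha (\<lambda>i. real (\<nu> i) / real (m i))) * (\<Prod>i<n. w i ^ l i)"
      unfolding c_def sum_distrib_right by (intro sum.cong refl) (simp only: mult_ac)
    then show "(\<Sum>\<nu>\<in>?P l. alpha (\<lambda>i. real (\<nu> i) / real (m i)) * c \<nu> l) = beta_coeff n m alpha l * (\<Prod>i<n. w i ^ l i)"
      unfolding beta_coeff_def d_def by simp
  qed
  finally show ?thesis .
qed

lemma indep_section:
  fixes M :: "'a measure" and T :: "'a \<Rightarrow> real" and Y :: "'a \<Rightarrow> 'b" and N :: "'b measure"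
  assumes P: "prob_space M" and rv: "T \<in> measurable M borel" "Y \<in> measurable M N"
  and ind: "prob_space.indep_set M {T -` A \<inter> space M | A. A \<in> sets borel}
               {Y -` B \<inter> space M | B. B \<in> sets N}"
  and S: "S \<in> sets (borel \<Otimes>\<^sub>M N)"
  shows "emeasure M {\<omega>\<in>space M. (T \<omega>, Y \<omega>) \<in> S}
       = (\<integral>\<^sup>+\<omega>. emeasure M {\<omega>'\<in>space M. (T \<omega>, Y \<omega>') \<in> S} \<partial>M)"
proof -
  interpret prob_space M by fact
  interpret PY: prob_space "distr M N Y" by (rule prob_space_distr[OF rv(2)])
  interpret PT: prob_space "distr M borel T" by (rule prob_space_distr[OF rv(1)])
  have XY: "(\<lambda>x. (T x, Y x)) \<in> measurable M (borel \<Otimes>\<^sub>M N)"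
    by (rule measurable_Pair[OF rv(1) rv(2)])
  have eq: "distr M borel T \<Otimes>\<^sub>M distr M N Y = distr M (borel \<Otimes>\<^sub>M N) (\<lambda>x. (T x, Y x))"
  proof (rule pair_measure_eqI)
    show "sigma_finite_measure (distr M borel T)" by (rule PT.sigma_finite_measure_axioms)
    show "sigma_finite_measure (distr M N Y)" by (rule PY.sigma_finite_measure_axioms)
    show "sets (distr M borel T \<Otimes>\<^sub>M distr M N Y) = sets (distr M (borel \<Otimes>\<^sub>M N) (\<lambda>x. (T x, Y x)))"
      by (simp only: sets_distr sets_pair_measure_cong[OF sets_distr sets_distr])
    fix A B assume A0: "A \<in> sets (distr M borel T)" and B0: "B \<in> sets (distr M N Y)"
    have A: "A \<in> sets borel" using A0 by (simp only: sets_distr)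
    have B: "B \<in> sets N" using B0 by (simp only: sets_distr)
    have AB: "A \<times> B \<in> sets (borel \<Otimes>\<^sub>M N)" by (rule pair_measureI[OF A B])
    have TA: "T -` A \<inter> space M \<in> {T -` A \<inter> space M | A. A \<in> sets borel}" using A by blast
    have YB: "Y -` B \<inter> space M \<in> {Y -` B \<inter> space M | B. B \<in> sets N}" using B by blast
    have "emeasure (distr M (borel \<Otimes>\<^sub>M N) (\<lambda>x. (T x, Y x))) (A \<times> B)
        = emeasure M ((\<lambda>x. (T x, Y x)) -` (A \<times> B) \<inter> space M)"
      by (rule emeasure_distr[OF XY AB])
    also have "(\<lambda>x. (T x, Y x)) -` (A \<times> B) \<inter> space M = (T -` A \<inter> space M) \<inter> (Y -` B \<inter> space M)"
      by blast
    also have "emeasure M \<dots> = ennreal (prob ((T -` A \<inter> space M) \<inter> (Y -` B \<inter> space M)))"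
      by (rule emeasure_eq_measure)
    also have "prob ((T -` A \<inter> space M) \<inter> (Y -` B \<inter> space M)) = prob (T -` A \<inter> space M) * prob (Y -` B \<inter> space M)"
      by (rule indep_setD[OF ind TA YB])
    also have "ennreal (prob (T -` A \<inter> space M) * prob (Y -` B \<inter> space M)) = emeasure M (T -` A \<inter> space M) * emeasure M (Y -` B \<inter> space M)"
      by (simp only: emeasure_eq_measure ennreal_mult measure_nonneg)
    also have "emeasure M (T -` A \<inter> space M) = emeasure (distr M borel T) A"
      by (rule emeasure_distr[OF rv(1) A, symmetric])
    also have "emeasure M (Y -` B \<inter> space M) = emeasure (distr M N Y) B"
      by (rule emeasure_distr[OF rv(2) B, symmetric])
    finally show "emeasure (distr M borel T) A * emeasure (distr M N Y) B = emeasure (distr M (borel \<Otimes>\<^sub>M N) (\<lambda>x. (T x, Y x))) (A \<times> B)" ..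
  qed
  have S2: "S \<in> sets (borel \<Otimes>\<^sub>M distr M N Y)"
    using S by (simp only: sets_pair_measure_cong[OF refl sets_distr])
  have mEP: "(\<lambda>t. emeasure (distr M N Y) (Pair t -` S)) \<in> borel_measurable borel"
    by (rule PY.measurable_emeasure_Pair[OF S2])
  have mEP': "(\<lambda>t. emeasure (distr M N Y) (Pair t -` S)) \<in> borel_measurable (distr M borel T)"
    by (subst measurable_cong_sets[OF sets_distr refl]) (rule mEP)
  have S': "S \<in> sets (distr M borel T \<Otimes>\<^sub>M distr M N Y)"
    using S by (simp only: sets_pair_measure_cong[OF sets_distr sets_distr])
  have "emeasure (distr M (borel \<Otimes>\<^sub>M N) (\<lambda>x. (T x, Y x))) S = emeasure M ((\<lambda>x. (T x, Y x)) -` S \<inter> space M)"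
    by (rule emeasure_distr[OF XY S])
  also have "(\<lambda>x. (T x, Y x)) -` S \<inter> space M = {\<omega>\<in>space M. (T \<omega>, Y \<omega>) \<in> S}" by blast
  finally have "emeasure M {\<omega>\<in>space M. (T \<omega>, Y \<omega>) \<in> S} = emeasure (distr M (borel \<Otimes>\<^sub>M N) (\<lambda>x. (T x, Y x))) S" ..
  also have "\<dots> = emeasure (distr M borel T \<Otimes>\<^sub>M distr M N Y) S" by (simp only: eq)
  also have "\<dots> = (\<integral>\<^sup>+t. emeasure (distr M N Y) (Pair t -` S) \<partial>distr M borel T)"
    by (rule PY.emeasure_pair_measure_alt[OF S'])
  also have "\<dots> = (\<integral>\<^sup>+\<omega>. emeasure (distr M N Y) (Pair (T \<omega>) -` S) \<partial>M)"
    by (rule nn_integral_distr[OF rv(1) mEP'])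
  also have "\<dots> = (\<integral>\<^sup>+\<omega>. emeasure M {\<omega>'\<in>space M. (T \<omega>, Y \<omega>') \<in> S} \<partial>M)"
  proof (rule nn_integral_cong)
    fix \<omega> assume "\<omega> \<in> space M"
    have PS: "Pair (T \<omega>) -` S \<in> sets N" by (rule sets_Pair1[OF S])
    have "emeasure (distr M N Y) (Pair (T \<omega>) -` S) = emeasure M (Y -` (Pair (T \<omega>) -` S) \<inter> space M)"
      by (rule emeasure_distr[OF rv(2) PS])
    also have "Y -` (Pair (T \<omega>) -` S) \<inter> space M = {\<omega>'\<in>space M. (T \<omega>, Y \<omega>') \<in> S}" by blast
    finally show "emeasure (distr M N Y) (Pair (T \<omega>) -` S) = emeasure M {\<omega>'\<in>space M. (T \<omega>, Y \<omega>') \<in> S}" .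
  qed
  finally show ?thesis .
qed
theorem proposition1:
  fixes M :: "'a measure" and n :: nat and m :: "nat \<Rightarrow> nat"
    and alpha :: "(nat \<Rightarrow> real) \<Rightarrow> real"
    and Z :: "nat \<Rightarrow> 'a \<Rightarrow> real" and \<Theta> :: "'a \<Rightarrow> real"
    and f\<^sub>\<Theta> :: "real \<Rightarrow> ennreal" and L :: "real \<Rightarrow> real"
  assumes "prob_space M"
    and "n \<ge> 2" and "\<forall>i<n. m i \<ge> 1"
    and "is_copula n (bernstein_copula n m alpha)"
    and "\<forall>i<n. Z i \<in> borel_measurable M"
    and "\<forall>i<n. \<forall>z\<ge>0. measure M {\<omega>\<in>space M. Z i \<omega> > z} = exp (- z)"
    and "\<forall>z. (\<forall>i<n. z i \<ge> 0) \<longrightarrow>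
           measure M {\<omega>\<in>space M. \<forall>i<n. Z i \<omega> > z i}
             = bernstein_copula n m alpha (\<lambda>i. exp (- z i))"
    and "\<Theta> \<in> borel_measurable M"
    and "AE \<omega> in M. \<Theta> \<omega> > 0"
    and "distributed M lborel \<Theta> f\<^sub>\<Theta>"
    and "prob_space.indep_set M
           {\<Theta> -` A \<inter> space M | A. A \<in> sets borel}
           {(\<lambda>\<omega>. \<lambda>i\<in>{..<n}. Z i \<omega>) -` B \<inter> space M | B. B \<in> sets (PiM {..<n} (\<lambda>_. borel))}"
    and "\<forall>s\<ge>0. L s = (\<integral>\<omega>. exp (- s * \<Theta> \<omega>) \<partial>M)"
    and "strict_antimono_on {0..} L" and "continuous_on {0..} L" and "L ` {0..} = {0<..1}"
  shows "(\<forall>i<n. \<forall>x\<ge>0. measure M {\<omega>\<in>space M. Z i \<omega> / \<Theta> \<omega> > x} = L x) \<and>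
         (\<forall>u. (\<forall>i<n. u i \<in> {0<..1}) \<longrightarrow>
            measure M {\<omega>\<in>space M. \<forall>i<n. Z i \<omega> / \<Theta> \<omega> > the_inv_into {0..} L (u i)}
              = (\<Sum>l\<in>PiE {..<n} (\<lambda>i. {0..m i}).
                   beta_coeff n m alpha l *
                   L (\<Sum>i<n. real (l i) * the_inv_into {0..} L (u i))))"
  proof -
  interpret prob_space M by (rule assms(1))
  define N where "N = PiM {..<n} (\<lambda>_. borel :: real measure)"
  define Zv where "Zv = (\<lambda>\<omega>. \<lambda>i\<in>{..<n}. Z i \<omega>)"
  have Zm: "Z i \<in> borel_measurable M" if "i < n" for i using assms(5) that by blast
  have Tm: "\<Theta> \<in> borel_measurable M" by (rule assms(8))
  have Zvm: "Zv \<in> measurable M N"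
    unfolding Zv_def N_def by (rule measurable_restrict) (use Zm in auto)
  have ind: "indep_set {\<Theta> -` A \<inter> space M | A. A \<in> sets borel} {Zv -` B \<inter> space M | B. B \<in> sets N}"
    using assms(11) unfolding Zv_def N_def .
  have key: "measure M {\<omega>\<in>space M. \<forall>i\<in>J. Z i \<omega> / \<Theta> \<omega> > y i} = (\<integral>\<omega>. F (\<Theta> \<omega>) \<partial>M)"
    if J: "J \<subseteq> {..<n}" and Fm: "(\<lambda>\<omega>. F (\<Theta> \<omega>)) \<in> borel_measurable M"
      and Fe: "\<And>t. t > 0 \<Longrightarrow> measure M {\<omega>'\<in>space M. \<forall>i\<in>J. y i * t < Z i \<omega>'} = F t"
    for J y and F :: "real \<Rightarrow> real"
  proof -
    have finJ: "finite J" using J finite_subset by blast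
    define S where "S = {p \<in> space (borel \<Otimes>\<^sub>M N). 0 < fst p \<and> (\<forall>i\<in>J. y i * fst p < snd p i)}"
    have P2: "Measurable.pred ((borel :: real measure) \<Otimes>\<^sub>M N) (\<lambda>p. \<forall>i\<in>J. y i * fst p < snd p i)"
    proof (rule pred_intros_finite(3)[OF finJ])
      fix i assume "i \<in> J"
      then have i: "i \<in> {..<n}" using J by auto
      have "(\<lambda>p. snd p i) \<in> borel_measurable ((borel :: real measure) \<Otimes>\<^sub>M N)"
        unfolding N_def by (rule measurable_compose[OF measurable_snd measurable_component_singleton[OF i]])
      then show "Measurable.pred ((borel :: real measure) \<Otimes>\<^sub>M N) (\<lambda>p. y i * fst p < snd p i)" by measurable
    qed
    have P1: "Measurable.pred ((borel :: real measure) \<Otimes>\<^sub>M N) (\<lambda>p. 0 < fst p)" by measurable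
    have S: "S \<in> sets (borel \<Otimes>\<^sub>M N)"
      unfolding S_def by (rule predE) (rule pred_intros_logic(3)[OF P1 P2])
    have Zvsp: "Zv \<omega> \<in> space N" for \<omega> unfolding Zv_def N_def by (simp add: space_PiM)
    define A where "A = {\<omega>\<in>space M. (\<Theta> \<omega>, Zv \<omega>) \<in> S}"
    define E where "E = {\<omega>\<in>space M. \<forall>i\<in>J. Z i \<omega> / \<Theta> \<omega> > y i}"
    have A: "A \<in> sets M" unfolding A_def using S Tm Zvm by measurable
    have E: "E \<in> sets M" unfolding E_def
    proof (rule predE, rule pred_intros_finite(3)[OF finJ])
      fix i assume "i \<in> J"
      then have "i < n" using J by auto
      then have "Z i \<in> borel_measurable M" by (rule Zm)
      then show "Measurable.pred M (\<lambda>\<omega>. y i < Z i \<omega> / \<Theta> \<omega>)" using Tm by measurable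
    qed
    have Zv_i: "Zv \<omega> i = Z i \<omega>" if "i \<in> J" for i \<omega> using that J unfolding Zv_def by auto
    have sec: "{\<omega>'\<in>space M. (t, Zv \<omega>') \<in> S} = {\<omega>'\<in>space M. \<forall>i\<in>J. y i * t < Z i \<omega>'}" if "t > 0" for t
      using that Zvsp by (auto simp: S_def space_pair_measure Zv_i)
    have "measure M E = measure M A"
    proof (rule measure_eq_AE[OF _ E A])
      show "AE x in M. (x \<in> E) = (x \<in> A)"
        using assms(9)
      proof eventually_elim
        case (elim \<omega>)
        have "(y i < Z i \<omega> / \<Theta> \<omega>) = (y i * \<Theta> \<omega> < Z i \<omega>)" for i
          using elim by (simp add: pos_less_divide_eq)
        then show ?case using elim Zvsp[of \<omega>]
          by (auto simp: E_def A_def S_def space_pair_measure Zv_i)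
      qed
    qed
    also have "measure M A = enn2real (emeasure M A)" by (simp add: measure_def)
    also have "emeasure M A = (\<integral>\<^sup>+\<omega>. emeasure M {\<omega>'\<in>space M. (\<Theta> \<omega>, Zv \<omega>') \<in> S} \<partial>M)"
      unfolding A_def by (rule indep_section[OF assms(1) Tm Zvm ind S])
    also have "\<dots> = (\<integral>\<^sup>+\<omega>. ennreal (F (\<Theta> \<omega>)) \<partial>M)"
    proof (rule nn_integral_cong_AE)
      show "AE \<omega> in M. emeasure M {\<omega>'\<in>space M. (\<Theta> \<omega>, Zv \<omega>') \<in> S} = ennreal (F (\<Theta> \<omega>))"
        using assms(9)
      proof eventually_elim
        case (elim \<omega>)
        then show ?case using Fe[OF elim] sec[OF elim] by (simp add: emeasure_eq_measure)
      qed
    qed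
    also have "enn2real \<dots> = (\<integral>\<omega>. F (\<Theta> \<omega>) \<partial>M)"
    proof (rule integral_eq_nn_integral[symmetric, OF Fm])
      show "AE x in M. 0 \<le> F (\<Theta> x)"
        using assms(9) by eventually_elim (metis Fe measure_nonneg)
    qed
    finally show ?thesis unfolding E_def .
  qed
  have Lint: "integrable M (\<lambda>\<omega>. exp (- s * \<Theta> \<omega>))" if "s \<ge> 0" for s
  proof (rule integrable_const_bound[where B=1])
    show "AE x in M. norm (exp (- s * \<Theta> x)) \<le> 1"
      using assms(9) by eventually_elim (use that in \<open>simp add: mult_nonneg_nonneg\<close>)
  qed (use Tm in measurable)
  show ?thesis
  proof (intro conjI allI impI)
    fix i x assume i: "i < n" and x: "(0::real) \<le> x"
    have "measure M {\<omega>\<in>space M. \<forall>i'\<in>{i}. Z i' \<omega> / \<Theta> \<omega> > (\<lambda>_. x) i'} = (\<integral>\<omega>. exp (- x * \<Theta> \<omega>) \<partial>M)"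
    proof (rule key)
      show "{i} \<subseteq> {..<n}" using i by auto
      show "(\<lambda>\<omega>. exp (- x * \<Theta> \<omega>)) \<in> borel_measurable M" using Tm by measurable
      fix t :: real assume t: "t > 0"
      have "measure M {\<omega>' \<in> space M. Z i \<omega>' > x * t} = exp (- (x * t))"
        using assms(6) i x t by simp
      then show "measure M {\<omega>' \<in> space M. \<forall>i'\<in>{i}. (\<lambda>_. x) i' * t < Z i' \<omega>'} = exp (- x * t)"
        by simp
    qed
    then show "measure M {\<omega> \<in> space M. x < Z i \<omega> / \<Theta> \<omega>} = L x"
      using assms(12) x by simp
  next
    fix u :: "nat \<Rightarrow> real" assume u: "\<forall>i<n. u i \<in> {0<..1}"
    define y where "y i = the_inv_into {0..} L (u i)" for i
    have inj: "inj_on L {0..}" using assms(13) strict_antimono_iff_antimono by blast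
    have y0: "y i \<ge> 0" if "i < n" for i
      using the_inv_into_into[OF inj, of "u i" "{0..}"] u that assms(15) unfolding y_def by auto
    define s where "s l = (\<Sum>i<n. real (l i) * y i)" for l :: "nat \<Rightarrow> nat"
    have s0: "s l \<ge> 0" for l unfolding s_def using y0 by (auto intro!: sum_nonneg)
    define F where "F t = (\<Sum>l\<in>PiE {..<n} (\<lambda>i. {0..m i}). beta_coeff n m alpha l * exp (- s l * t))" for t
    have "measure M {\<omega>\<in>space M. \<forall>i\<in>{..<n}. Z i \<omega> / \<Theta> \<omega> > y i} = (\<integral>\<omega>. F (\<Theta> \<omega>) \<partial>M)"
    proof (rule key)
      show "{..<n} \<subseteq> {..<n}" by simp
      show "(\<lambda>\<omega>. F (\<Theta> \<omega>)) \<in> borel_measurable M" unfolding F_def using Tm by measurable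
      fix t :: real assume t: "t > 0"
      have "measure M {\<omega>'\<in>space M. \<forall>i<n. Z i \<omega>' > y i * t} = bernstein_copula n m alpha (\<lambda>i. exp (- (y i * t)))"
        using assms(7)[rule_format, of "\<lambda>i. y i * t"] y0 t by simp
      also have "\<dots> = (\<Sum>l\<in>PiE {..<n} (\<lambda>i. {0..m i}). beta_coeff n m alpha l * (\<Prod>i<n. exp (- (y i * t)) ^ l i))"
        by (rule bern_multi)
      also have "\<dots> = F t"
        unfolding F_def
      proof (intro sum.cong refl arg_cong[where f="\<lambda>z. _ * z"])
        fix l :: "nat \<Rightarrow> nat"
        have "(\<Prod>i<n. exp (- (y i * t)) ^ l i) = (\<Prod>i<n. exp (real (l i) * (- (y i * t))))"
          by (intro prod.cong refl) (rule exp_of_nat_mult[symmetric])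
        also have "\<dots> = exp (\<Sum>i<n. real (l i) * (- (y i * t)))" by (simp add: exp_sum)
        also have "(\<Sum>i<n. real (l i) * (- (y i * t))) = - s l * t"
          unfolding s_def by (simp add: sum_distrib_left sum_distrib_right sum_negf mult_ac)
        finally show "(\<Prod>i<n. exp (- (y i * t)) ^ l i) = exp (- s l * t)" .
      qed
      finally show "measure M {\<omega>'\<in>space M. \<forall>i\<in>{..<n}. y i * t < Z i \<omega>'} = F t" by (simp only: Ball_def lessThan_iff)
    qed
    also have "\<dots> = (\<Sum>l\<in>PiE {..<n} (\<lambda>i. {0..m i}). beta_coeff n m alpha l * (\<integral>\<omega>. exp (- s l * \<Theta> \<omega>) \<partial>M))"
      unfolding F_def using Lint[OF s0] by (simp add: integral_sum integral_mult_right)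
    also have "\<dots> = (\<Sum>l\<in>PiE {..<n} (\<lambda>i. {0..m i}). beta_coeff n m alpha l * L (s l))"
      using assms(12) s0 by simp
    finally show "measure M {\<omega>\<in>space M. \<forall>i<n. Z i \<omega> / \<Theta> \<omega> > the_inv_into {0..} L (u i)}
              = (\<Sum>l\<in>PiE {..<n} (\<lambda>i. {0..m i}).
                   beta_coeff n m alpha l *
                   L (\<Sum>i<n. real (l i) * the_inv_into {0..} L (u i)))"
      by (simp only: y_def s_def Ball_def lessThan_iff)
  qed
qed

end
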